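(* Let $\mathcal{M}=(E,\mathcal{B})$ be a matroid of rank $r$. The vanishing ideal $I(V_{\mathcal{M}})\subseteq\mathbb{R}[x_e:e\in E]$ is generated by the polynomials $x_e^2-x_e$ for all $e\in E$, the polynomial $\sum_{e\in E}x_e-r$, and the monomials $x^C=\prod_{e\in C}x_e$ for all circuits $C\subseteq E$ of $\mathcal{M}$.
   Context: $V_{\mathcal{M}}=\{\mathbf{1}_B:B\in\mathcal{B}\}\subset\mathbb{R}^E$ is the base configuration; for a point set $V$, $I(V)$ is the ideal of all real polynomials vanishing at every point of $V$. Circuits are the inclusion-minimal dependent sets (sets not contained in any basis). *)

theory Defs
  imports Complex_Main "HOL-Library.Poly_Mapping" "HOL-Library.Indicator_Function"
begin

text \<open>Real multivariate polynomials in variables indexed by 'e: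
  a polynomial is a finitely supported map from monomials (exponent vectors,
  finitely supported maps 'e \<Rightarrow> nat) to real coefficients, with the
  convolution ring structure of Poly_Mapping.\<close>

type_synonym 'e mpoly_real = "('e \<Rightarrow>\<^sub>0 nat) \<Rightarrow>\<^sub>0 real"

definition var :: "'e \<Rightarrow> 'e mpoly_real" where
  "var e = Poly_Mapping.single (Poly_Mapping.single e 1) 1"

definition const :: "real \<Rightarrow> 'e mpoly_real" where
  "const c = Poly_Mapping.single 0 c"

definition eval :: "'e mpoly_real \<Rightarrow> ('e \<Rightarrow> real) \<Rightarrow> real" where
  "eval p a = (\<Sum>mon\<in>Poly_Mapping.keys p. Poly_Mapping.lookup p mon * (\<Prod>e\<in>Poly_Mapping.keys mon. a e ^ Poly_Mapping.lookup mon e))"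

definition vanishing_ideal :: "('e \<Rightarrow> real) set \<Rightarrow> 'e mpoly_real set" where
  "vanishing_ideal V = {p. \<forall>v\<in>V. eval p v = 0}"

definition ideal_gen :: "'e mpoly_real set \<Rightarrow> 'e mpoly_real set" where
  "ideal_gen G = {p. \<exists>F q. finite F \<and> F \<subseteq> G \<and> p = (\<Sum>g\<in>F. q g * g)}"

definition matroid_bases :: "'e::finite set set \<Rightarrow> bool" where
  "matroid_bases \<B> \<longleftrightarrow> \<B> \<noteq> {} \<and>
     (\<forall>B1\<in>\<B>. \<forall>B2\<in>\<B>. \<forall>x\<in>B1 - B2. \<exists>y\<in>B2 - B1. insert y (B1 - {x}) \<in> \<B>)"

definition indep :: "'e set set \<Rightarrow> 'e set \<Rightarrow> bool" where
  "indep \<B> X \<longleftrightarrow> (\<exists>B\<in>\<B>. X \<subseteq> B)"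

definition circuit :: "'e set set \<Rightarrow> 'e set \<Rightarrow> bool" where
  "circuit \<B> C \<longleftrightarrow> \<not> indep \<B> C \<and> (\<forall>D. D \<subset> C \<longrightarrow> indep \<B> D)"

definition base_configuration :: "'e set set \<Rightarrow> ('e \<Rightarrow> real) set" where
  "base_configuration \<B> = (\<lambda>B. indicator B) ` \<B>"

end

theory Submission imports Defs begin

lemma pm_induct[case_names zero single add]:
  assumes "P 0" "\<And>k v. P (Poly_Mapping.single k v)" "\<And>f g. P f \<Longrightarrow> P g \<Longrightarrow> P (f + g)"
  shows "P f"
proof (induction f rule: update_induct)
  case const then show ?case using assms(1) .
next
  case (update f a b)
  have "Poly_Mapping.update a b f = f + Poly_Mapping.single a b"
    using update(1)
    by (intro poly_mapping_eqI) (auto simp: lookup_update lookup_add lookup_single in_keys_iff when_def)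
  then show ?case using assms(2,3) update(3) by simp
qed

definition mon :: "('e \<Rightarrow>\<^sub>0 nat) \<Rightarrow> ('e \<Rightarrow> real) \<Rightarrow> real" where
  "mon m a = (\<Prod>e\<in>Poly_Mapping.keys m. a e ^ Poly_Mapping.lookup m e)"

lemma mon_univ: "mon m a = (\<Prod>e\<in>UNIV. a e ^ Poly_Mapping.lookup m (e::'e::finite))"
  unfolding mon_def by (rule prod.mono_neutral_left) (auto simp: in_keys_iff)

lemma mon_add: "mon (m1 + m2) a = mon m1 a * mon (m2::'e::finite \<Rightarrow>\<^sub>0 nat) a"
  unfolding mon_univ by (simp add: lookup_add power_add prod.distrib)

lemma eval_alt: "finite S \<Longrightarrow> Poly_Mapping.keys p \<subseteq> S \<Longrightarrow>
   eval p a = (\<Sum>m\<in>S. Poly_Mapping.lookup p m * mon m a)"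
  unfolding eval_def mon_def[symmetric]
  by (rule sum.mono_neutral_left) (auto simp: in_keys_iff)

lemma eval_add: "eval (p + q) a = eval p a + eval q a"
proof -
  let ?S = "Poly_Mapping.keys p \<union> Poly_Mapping.keys q \<union> Poly_Mapping.keys (p+q)"
  have f: "finite ?S" by simp
  show ?thesis
    by (subst (1 2 3) eval_alt[OF f]) (auto simp: lookup_add distrib_right sum.distrib)
qed

lemma eval_zero[simp]: "eval 0 a = 0"
  by (simp add: eval_def)

lemma eval_single: "eval (Poly_Mapping.single m c) a = c * mon m a"
  by (subst eval_alt[of "{m}"]) auto

lemma eval_mult: "eval (p * q) a = eval p a * eval (q :: 'e::finite mpoly_real) a"
proof (induction p rule: pm_induct)
  case zero then show ?case by simp
next
  case (add f g) then show ?case by (simp add: distrib_right eval_add)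
next
  case (single k v)
  show ?case
  proof (induction q rule: pm_induct)
    case zero then show ?case by simp
  next
    case (add f g) then show ?case by (simp add: distrib_left eval_add)
  next
    case (single l w) then show ?case by (simp add: mult_single eval_single mon_add)
  qed
qed

lemma eval_uminus: "eval (- p) a = - eval p a"
  using eval_add[of "-p" p a] by simp

lemma eval_diff: "eval (p - q) a = eval p a - eval q a"
  using eval_add[of p "-q" a] eval_uminus[of q a] by simp

lemma eval_one[simp]: "eval 1 a = 1"
  using eval_single[of 0 1 a] by (simp add: mon_def)

lemma eval_const[simp]: "eval (const c) a = c"
  using eval_single[of 0 c a] by (simp add: mon_def const_def)

lemma eval_var[simp]: "eval (var e) a = a e"
  using eval_single[of "Poly_Mapping.single e 1" 1 a] by (simp add: mon_def var_def)

lemma eval_sum: "eval (\<Sum>i\<in>I. f i) a = (\<Sum>i\<in>I. eval (f i) a)"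
  by (induction I rule: infinite_finite_induct) (auto simp: eval_add)

lemma eval_prod: "eval (\<Prod>i\<in>I. f i) a = (\<Prod>i\<in>I. eval (f i :: 'e::finite mpoly_real) a)"
  by (induction I rule: infinite_finite_induct) (auto simp: eval_mult)

lemma eval_power: "eval (p ^ n) a = eval (p :: 'e::finite mpoly_real) a ^ n"
  by (induction n) (auto simp: eval_mult)

lemma const_mult: "const a * const b = const (a * b)"
  by (simp add: const_def mult_single)
lemma const_1[simp]: "const 1 = 1" by (simp add: const_def)
lemma const_diff: "const (a - b) = const a - const b" by (simp add: const_def single_diff)
lemma const_of_nat: "const (real n) = of_nat n" by (simp add: const_def)

lemma ig_0: "0 \<in> ideal_gen G"
  unfolding ideal_gen_def by (rule CollectI, rule exI[of _ "{}"]) auto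

lemma ig_gen: "g \<in> G \<Longrightarrow> g \<in> ideal_gen G"
  unfolding ideal_gen_def by (intro CollectI exI[of _ "{g}"] exI[of _ "\<lambda>_. 1"]) auto

lemma ig_add: assumes "p \<in> ideal_gen G" "q \<in> ideal_gen G" shows "p + q \<in> ideal_gen G"
proof -
  obtain F1 q1 where 1: "finite F1" "F1 \<subseteq> G" "p = (\<Sum>g\<in>F1. q1 g * g)" using assms(1) unfolding ideal_gen_def by blast
  obtain F2 q2 where 2: "finite F2" "F2 \<subseteq> G" "q = (\<Sum>g\<in>F2. q2 g * g)" using assms(2) unfolding ideal_gen_def by blast
  define h where "h g = (if g \<in> F1 then q1 g else 0) + (if g \<in> F2 then q2 g else 0)" for g
  have a: "p = (\<Sum>g\<in>F1 \<union> F2. (if g \<in> F1 then q1 g else 0) * g)"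
    unfolding 1(3) by (rule sum.mono_neutral_cong_left) (use 1 2 in auto)
  have b: "q = (\<Sum>g\<in>F1 \<union> F2. (if g \<in> F2 then q2 g else 0) * g)"
    unfolding 2(3) by (rule sum.mono_neutral_cong_left) (use 1 2 in auto)
  have "p + q = (\<Sum>g\<in>F1 \<union> F2. h g * g)"
    unfolding a b h_def by (simp add: sum.distrib distrib_right)
  then show ?thesis unfolding ideal_gen_def using 1 2 by (intro CollectI exI[of _ "F1 \<union> F2"] exI[of _ h]) auto
qed

lemma ig_mult: assumes "p \<in> ideal_gen G" shows "r * p \<in> ideal_gen G"
proof -
  obtain F q where 1: "finite F" "F \<subseteq> G" "p = (\<Sum>g\<in>F. q g * g)" using assms(1) unfolding ideal_gen_def by blast
  have "r * p = (\<Sum>g\<in>F. (r * q g) * g)" unfolding 1 by (simp add: sum_distrib_left mult.assoc)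
  then show ?thesis unfolding ideal_gen_def using 1 by (intro CollectI exI[of _ F] exI[of _ "\<lambda>g. r * q g"]) auto
qed

lemma ig_mult2: "p \<in> ideal_gen G \<Longrightarrow> p * r \<in> ideal_gen G"
  using ig_mult[of p G r] by (simp add: mult.commute)

lemma ig_diff: "p \<in> ideal_gen G \<Longrightarrow> q \<in> ideal_gen G \<Longrightarrow> p - q \<in> ideal_gen G"
  using ig_add[of p G "(-1) * q"] ig_mult[of q G "-1"] by (simp only: mult_minus1 diff_conv_add_uminus)

lemma ig_sum: "(\<And>i. i \<in> I \<Longrightarrow> f i \<in> ideal_gen G) \<Longrightarrow> (\<Sum>i\<in>I. f i) \<in> ideal_gen G"
  by (induction I rule: infinite_finite_induct) (auto simp: ig_0 ig_add)

lemma ig_mono: "G \<subseteq> H \<Longrightarrow> ideal_gen G \<subseteq> ideal_gen H"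
  unfolding ideal_gen_def by blast

lemma ig_vanish: assumes "p \<in> ideal_gen G" "\<And>g. g \<in> G \<Longrightarrow> eval g a = 0"
  shows "eval p (a :: 'e::finite \<Rightarrow> real) = 0"
proof -
  obtain F q where 1: "finite F" "F \<subseteq> G" "p = (\<Sum>g\<in>F. q g * g)" using assms(1) unfolding ideal_gen_def by blast
  show ?thesis unfolding 1(3) eval_sum eval_mult using 1(2) assms(2) by (intro sum.neutral) auto
qed

lemma update_eq_add: "a \<notin> Poly_Mapping.keys f \<Longrightarrow> Poly_Mapping.update a b f = f + Poly_Mapping.single a b"
  by (intro poly_mapping_eqI) (auto simp: lookup_update lookup_add lookup_single in_keys_iff when_def)

definition delta :: "'e set \<Rightarrow> 'e mpoly_real" where
  "delta A = (\<Prod>e\<in>A. var e) * (\<Prod>e\<in>-A. 1 - var e)"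

definition G0 :: "'e mpoly_real set" where
  "G0 = {var e ^ 2 - var e | e. True}"

lemma delta_sum: "(\<Sum>A\<in>UNIV. delta A) = (1::'e::finite mpoly_real)"
proof -
  have "(\<Prod>x\<in>(UNIV::'e set). var x + (1 - var x)) = (\<Sum>X\<in>Pow UNIV. (\<Prod>x\<in>X. var x) * (\<Prod>x\<in>UNIV-X. 1 - var x))"
    by (rule prod_add) simp
  then show ?thesis by (simp add: delta_def Compl_eq_Diff_UNIV)
qed

lemma var_delta: "var e * delta A - (if e \<in> A then delta A else 0) \<in> ideal_gen (G0 :: 'e::finite mpoly_real set)"
proof (cases "e \<in> A")
  case True
  define R where "R = (\<Prod>e\<in>A-{e}. var e) * (\<Prod>e\<in>-A. 1 - var e)"
  have d: "delta A = var e * R" unfolding delta_def R_def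
    using prod.remove[of A e var] True by (simp add: mult.assoc)
  have "var e * delta A - (if e \<in> A then delta A else 0) = (var e ^ 2 - var e) * R"
    using True unfolding d by (simp add: power2_eq_square algebra_simps)
  moreover have "var e ^ 2 - var e \<in> G0" unfolding G0_def by blast
  ultimately show ?thesis by (simp add: ig_mult2 ig_gen)
next
  case False
  define R where "R = (\<Prod>e\<in>A. var e) * (\<Prod>e\<in>-A-{e}. 1 - var e)"
  have hp: "(\<Prod>e\<in>-A. 1 - var e) = (1 - var e) * (\<Prod>e\<in>-A-{e}. 1 - var e)"
    using prod.remove[of "-A" e "\<lambda>e. 1 - var e"] False by simp
  have d: "delta A = (1 - var e) * R" unfolding delta_def R_def hp by (simp only: ac_simps)
  have eq: "var e * delta A - (if e \<in> A then delta A else 0) = (- R) * (var e ^ 2 - var e)"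
    using False unfolding d by (simp add: power2_eq_square algebra_simps)
  have g: "var e ^ 2 - var e \<in> G0" unfolding G0_def by blast
  show ?thesis unfolding eq by (rule ig_mult[OF ig_gen[OF g]])
qed

definition Pred :: "'e::finite mpoly_real \<Rightarrow> bool" where
  "Pred p \<longleftrightarrow> (\<exists>c. p - (\<Sum>A\<in>UNIV. const (c A) * delta A) \<in> ideal_gen G0)"

lemma Pred_add: "Pred p \<Longrightarrow> Pred q \<Longrightarrow> Pred (p + q)"
proof -
  assume "Pred p" "Pred q"
  then obtain c1 c2 where 1: "p - (\<Sum>A\<in>UNIV. const (c1 A) * delta A) \<in> ideal_gen G0"
    and 2: "q - (\<Sum>A\<in>UNIV. const (c2 A) * delta A) \<in> ideal_gen G0" unfolding Pred_def by blast
  have eq: "p + q - (\<Sum>A\<in>UNIV. const (c1 A + c2 A) * delta A) =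
     (p - (\<Sum>A\<in>UNIV. const (c1 A) * delta A)) + (q - (\<Sum>A\<in>UNIV. const (c2 A) * delta A))"
    by (simp add: const_def single_add distrib_right sum.distrib)
  have "p + q - (\<Sum>A\<in>UNIV. const (c1 A + c2 A) * delta A) \<in> ideal_gen G0"
    unfolding eq by (rule ig_add[OF 1 2])
  then show ?thesis unfolding Pred_def by (rule exI[of _ "\<lambda>A. c1 A + c2 A"])
qed

lemma abel3: "a - b + (b - c) = a - (c::'a::ab_group_add)" by simp

lemma Pred_var: "Pred p \<Longrightarrow> Pred (var e * p)"
proof -
  assume "Pred p"
  then obtain c where 1: "p - (\<Sum>A\<in>UNIV. const (c A) * delta A) \<in> ideal_gen G0" unfolding Pred_def by blast
  define c' where "c' A = (if e \<in> A then c A else 0)" for A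
  have s1: "(\<Sum>A\<in>UNIV. const (c' A) * delta A) = (\<Sum>A\<in>UNIV. const (c A) * (if e \<in> A then delta A else 0))"
  proof (rule sum.cong[OF refl])
    fix A :: "'a set"
    show "const (c' A) * delta A = const (c A) * (if e \<in> A then delta A else 0)"
      by (cases "e \<in> A") (simp_all add: c'_def const_def)
  qed
  have t1: "var e * (\<Sum>A\<in>UNIV. const (c A) * delta A) = (\<Sum>A\<in>UNIV. const (c A) * (var e * delta A))"
    by (simp only: sum_distrib_left mult.left_commute)
  have t2: "(\<Sum>A\<in>UNIV. const (c A) * (var e * delta A - (if e \<in> A then delta A else 0))) =
     (\<Sum>A\<in>UNIV. const (c A) * (var e * delta A)) - (\<Sum>A\<in>UNIV. const (c A) * (if e \<in> A then delta A else 0))"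
    by (simp only: right_diff_distrib sum_subtractf)
  have "var e * p - (\<Sum>A\<in>UNIV. const (c' A) * delta A) =
     var e * (p - (\<Sum>A\<in>UNIV. const (c A) * delta A)) +
     (\<Sum>A\<in>UNIV. const (c A) * (var e * delta A - (if e \<in> A then delta A else 0)))"
    unfolding s1 t2 right_diff_distrib[of "var e" p] t1 by (rule abel3[symmetric])
  moreover have "(\<Sum>A\<in>UNIV. const (c A) * (var e * delta A - (if e \<in> A then delta A else 0))) \<in> ideal_gen G0"
    by (intro ig_sum ig_mult var_delta)
  ultimately have "var e * p - (\<Sum>A\<in>UNIV. const (c' A) * delta A) \<in> ideal_gen G0"
    using ig_add[OF ig_mult[OF 1, of "var e"]] by simp
  then show ?thesis unfolding Pred_def by (rule exI[of _ c'])
qed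

lemma Pred_const: "Pred (Poly_Mapping.single 0 v)"
proof -
  have "Poly_Mapping.single 0 v - (\<Sum>A\<in>UNIV. const v * delta A) = (0::'a mpoly_real)"
    by (simp add: sum_distrib_left[symmetric] delta_sum const_def)
  then show ?thesis unfolding Pred_def using ig_0 by (intro exI[of _ "\<lambda>A. v"]) simp
qed

lemma var_pow: "var a ^ b = Poly_Mapping.single (Poly_Mapping.single a b) 1"
  by (induction b) (simp_all add: var_def mult_single single_add[symmetric] add.commute)

lemma Pred_var_pow: "Pred p \<Longrightarrow> Pred (var a ^ b * p)"
  by (induction b) (simp_all add: Pred_var mult.assoc)

lemma Pred_single: "Pred (Poly_Mapping.single m v)"
proof (induction m arbitrary: v rule: update_induct)
  case const then show ?case by (rule Pred_const)
next
  case (update f a b)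
  have "Poly_Mapping.single (Poly_Mapping.update a b f) v = var a ^ b * Poly_Mapping.single f v"
    by (simp add: update_eq_add[OF update(1)] var_pow mult_single add.commute)
  then show ?case using Pred_var_pow[OF update(3)] by simp
qed

lemma Pred_all: "Pred p"
proof (induction p rule: pm_induct)
  case zero then show ?case using Pred_const[of 0] by simp
next
  case (single k v) then show ?case by (rule Pred_single)
next
  case (add f g) then show ?case by (rule Pred_add)
qed

lemma G0_vanish: "g \<in> G0 \<Longrightarrow> eval g (indicator (B::'e::finite set)) = 0"
  unfolding G0_def by (auto simp: eval_diff eval_power indicator_def)

lemma eval_delta: "eval (delta A) (indicator (B::'e::finite set)) = (if A = B then 1 else (0::real))"
proof -
  have ev: "eval (delta A) (indicator B) = (\<Prod>e\<in>A. indicator B e) * (\<Prod>e\<in>-A. 1 - indicator B e)"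
    unfolding delta_def by (simp add: eval_mult eval_prod eval_diff)
  show ?thesis
  proof (cases "A = B")
    case True then show ?thesis unfolding ev by (simp add: indicator_def)
  next
    case False
    then obtain e where "e \<in> A - B \<or> e \<in> B - A" by blast
    then have "(\<Prod>e\<in>A. indicator B e) = (0::real) \<or> (\<Prod>e\<in>-A. 1 - indicator B e) = (0::real)"
      by (auto simp: prod_zero_iff indicator_def)
    then show ?thesis unfolding ev using False by auto
  qed
qed

lemma exists_circuit:
  assumes "\<not> indep \<B> (A::'e::finite set)"
  shows "\<exists>C. C \<subseteq> A \<and> circuit \<B> C"
proof -
  obtain C where C: "C \<subseteq> A \<and> \<not> indep \<B> C"
    and min: "\<And>D. D \<subseteq> A \<and> \<not> indep \<B> D \<Longrightarrow> card C \<le> card D"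
    using ex_has_least_nat[of "\<lambda>D. D \<subseteq> A \<and> \<not> indep \<B> D" A card] assms by blast
  have "circuit \<B> C" unfolding circuit_def
  proof (intro conjI allI impI)
    show "\<not> indep \<B> C" using C by blast
  next
    fix D assume "D \<subset> C"
    then have "card D < card C" by (simp add: psubset_card_mono)
    then show "indep \<B> D" using min[of D] C \<open>D \<subset> C\<close> by force
  qed
  then show ?thesis using C by blast
qed

theorem proposition4p4:
  fixes \<B> :: "'e::finite set set" and r :: nat
  assumes "matroid_bases \<B>"
    and "\<forall>B\<in>\<B>. card B = r"
  shows "vanishing_ideal (base_configuration \<B>) =
    ideal_gen ({var e ^ 2 - var e | e. True}
               \<union> {(\<Sum>e\<in>UNIV. var e) - const (real r)}
               \<union> {(\<Prod>e\<in>C. var e) | C. circuit \<B> C})"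
  (is "?V = ideal_gen ?G")
proof
  define \<sigma> :: "'e mpoly_real" where "\<sigma> = (\<Sum>e\<in>UNIV. var e) - const (real r)"
  have G0G: "G0 \<subseteq> ?G" unfolding G0_def by blast
  have sG: "\<sigma> \<in> ?G" unfolding \<sigma>_def by blast
  have IbJ: "ideal_gen G0 \<subseteq> ideal_gen ?G" by (rule ig_mono[OF G0G])
  show "?V \<subseteq> ideal_gen ?G"
  proof
    fix p assume p: "p \<in> ?V"
    obtain c where c: "p - (\<Sum>A\<in>UNIV. const (c A) * delta A) \<in> ideal_gen G0"
      using Pred_all[of p] unfolding Pred_def by blast
    have cB: "c B = 0" if B: "B \<in> \<B>" for B
    proof -
      have "eval p (indicator B) = 0" using p B unfolding vanishing_ideal_def base_configuration_def by blast
      moreover have "eval (p - (\<Sum>A\<in>UNIV. const (c A) * delta A)) (indicator B) = 0"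
        by (rule ig_vanish[OF c G0_vanish])
      moreover have "eval (\<Sum>A\<in>UNIV. const (c A) * delta A) (indicator B) = c B"
      proof -
        have "(\<Sum>A\<in>UNIV. c A * (if A = B then 1 else 0)) = (\<Sum>A\<in>UNIV. if A = B then c A else 0)"
          by (rule sum.cong) auto
        then show ?thesis by (simp add: eval_sum eval_mult eval_delta)
      qed
      ultimately show ?thesis by (simp add: eval_diff)
    qed
    have dA: "delta A \<in> ideal_gen ?G" if A: "A \<notin> \<B>" for A
    proof (cases "indep \<B> A")
      case False
      then obtain C where C: "C \<subseteq> A" "circuit \<B> C" using exists_circuit by blast
      have deq: "delta A = (\<Prod>e\<in>C. var e) * ((\<Prod>e\<in>A-C. var e) * (\<Prod>e\<in>-A. 1 - var e))"
        unfolding delta_def prod.subset_diff[OF C(1) finite] by (simp only: ac_simps)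
      have cg: "(\<Prod>e\<in>C. var e) \<in> ?G" using C(2) by blast
      show ?thesis unfolding deq by (rule ig_mult2[OF ig_gen[OF cg]])
    next
      case True
      then obtain B where B: "B \<in> \<B>" "A \<subseteq> B" unfolding indep_def by blast
      with A have "A \<subset> B" by blast
      then have lt: "card A < r" using B assms(2) psubset_card_mono[of B A] by auto
      have s1: "delta A * \<sigma> \<in> ideal_gen ?G" by (rule ig_mult[OF ig_gen[OF sG]])
      have s2: "(\<Sum>e\<in>UNIV. var e * delta A - (if e \<in> A then delta A else 0)) \<in> ideal_gen ?G"
        by (intro ig_sum subsetD[OF IbJ] var_delta)
      have sif: "(\<Sum>e\<in>UNIV. (if e \<in> A then delta A else 0)) = of_nat (card A) * delta A"
        by (simp add: sum.If_cases)
      have eq: "(of_nat (card A) - const (real r)) * delta A =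
         delta A * \<sigma> - (\<Sum>e\<in>UNIV. var e * delta A - (if e \<in> A then delta A else 0))"
        unfolding sum_subtractf sif \<sigma>_def
        by (simp add: algebra_simps sum_distrib_left)
      have m: "(of_nat (card A) - const (real r)) * delta A \<in> ideal_gen ?G"
        unfolding eq by (rule ig_diff[OF s1 s2])
      have inv: "const (1 / (real (card A) - real r)) * (of_nat (card A) - const (real r)) = 1"
        using lt by (simp add: const_of_nat[symmetric] const_diff[symmetric] const_mult)
      have "delta A = const (1 / (real (card A) - real r)) * ((of_nat (card A) - const (real r)) * delta A)"
        by (simp only: mult.assoc[symmetric] inv mult_1_left)
      then show ?thesis using ig_mult[OF m, of "const (1 / (real (card A) - real r))"] by simp
    qed
    have peq: "(p - (\<Sum>A\<in>UNIV. const (c A) * delta A)) + (\<Sum>A\<in>UNIV. const (c A) * delta A) = p" by simp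
    have sum_in: "(\<Sum>A\<in>UNIV. const (c A) * delta A) \<in> ideal_gen ?G"
    proof (rule ig_sum)
      fix A :: "'e set"
      show "const (c A) * delta A \<in> ideal_gen ?G"
      proof (cases "A \<in> \<B>")
        case True then show ?thesis using cB[OF True] ig_0 by (simp add: const_def)
      next
        case False then show ?thesis by (rule ig_mult[OF dA])
      qed
    qed
    show "p \<in> ideal_gen ?G" using ig_add[OF subsetD[OF IbJ c] sum_in] unfolding peq .
  qed
next
  show "ideal_gen ?G \<subseteq> ?V"
  proof
    fix p assume p: "p \<in> ideal_gen ?G"
    show "p \<in> ?V" unfolding vanishing_ideal_def base_configuration_def
    proof (intro CollectI ballI)
      fix v :: "'e \<Rightarrow> real" assume "v \<in> (\<lambda>B. indicator B) ` \<B>"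
      then obtain B where B: "B \<in> \<B>" "v = indicator B" by blast
      show "eval p v = 0" unfolding B(2)
      proof (rule ig_vanish[OF p])
        fix g assume g: "g \<in> ?G"
        show "eval g (indicator B) = 0"
        proof -
          consider (a) "g \<in> G0" | (b) "g = (\<Sum>e\<in>UNIV. var e) - const (real r)"
            | (c) C where "g = (\<Prod>e\<in>C. var e)" "circuit \<B> C"
            using g unfolding G0_def by blast
          then show ?thesis
          proof cases
            case a then show ?thesis by (rule G0_vanish)
          next
            case b
            have "(\<Sum>e\<in>UNIV. indicator B e) = (real (card B))"
              using sum_mult_indicator[of "UNIV::'e set" "\<lambda>_. 1::real" B] by simp
            then show ?thesis using b B assms(2)
              by (simp add: eval_diff eval_sum)
          next
            case c
            then have "\<not> C \<subseteq> B" using B unfolding circuit_def indep_def by blast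
            then obtain e where "e \<in> C" "e \<notin> B" by blast
            then show ?thesis using c by (auto simp: eval_prod prod_zero_iff indicator_def)
          qed
        qed
      qed
    qed
  qed
qed

end
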